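(* If $G$ is a $C$-group, then the profinite completion of $G$ is a profinite-$C$ group.
   Context: A permutable complement of a subgroup $H$ of a group $G$ is a subgroup $K$ with $G=HK$ and $H\cap K=1$. A group is a $C$-group if every subgroup has a permutable complement. A profinite group $G$ is a profinite-$C$ group if every closed subgroup of $G$ has a closed permutable complement in $G$. *)

theory Defs
  imports "HOL-Analysis.Analysis" "HOL-Algebra.Algebra"
begin

definition permutable_complement :: "('a, 'b) monoid_scheme \<Rightarrow> 'a set \<Rightarrow> 'a set \<Rightarrow> bool" where
  "permutable_complement G H K \<longleftrightarrow>
     subgroup K G \<and> H <#>\<^bsub>G\<^esub> K = carrier G \<and> H \<inter> K = {\<one>\<^bsub>G\<^esub>}"

definition C_group :: "('a, 'b) monoid_scheme \<Rightarrow> bool" where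
  "C_group G \<longleftrightarrow> group G \<and> (\<forall>H. subgroup H G \<longrightarrow> (\<exists>K. permutable_complement G H K))"

definition topological_group :: "('a, 'b) monoid_scheme \<Rightarrow> 'a topology \<Rightarrow> bool" where
  "topological_group G T \<longleftrightarrow> group G \<and> topspace T = carrier G \<and>
     continuous_map (prod_topology T T) T (\<lambda>(x, y). x \<otimes>\<^bsub>G\<^esub> y) \<and>
     continuous_map T T (\<lambda>x. inv\<^bsub>G\<^esub> x)"

definition profinite_group :: "('a, 'b) monoid_scheme \<Rightarrow> 'a topology \<Rightarrow> bool" where
  "profinite_group G T \<longleftrightarrow> topological_group G T \<and> compact_space T \<and> Hausdorff_space T \<and>
     (\<forall>x\<in>topspace T. connected_component_of_set T x = {x})"

definition profinite_C_group :: "('a, 'b) monoid_scheme \<Rightarrow> 'a topology \<Rightarrow> bool" where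
  "profinite_C_group G T \<longleftrightarrow> profinite_group G T \<and>
     (\<forall>H. subgroup H G \<and> closedin T H \<longrightarrow>
        (\<exists>K. closedin T K \<and> permutable_complement G H K))"

text \<open>Profinite completion: inverse limit of the finite quotients G/N,
  N ranging over normal subgroups of finite index, realised as the set of
  compatible families of cosets inside the product, with the subspace topology
  of the product of discrete topologies.\<close>
definition fin_index_normals :: "('a, 'b) monoid_scheme \<Rightarrow> 'a set set" where
  "fin_index_normals G = {N. N \<lhd> G \<and> finite (rcosets\<^bsub>G\<^esub> N)}"

definition profinite_completion :: "('a, 'b) monoid_scheme \<Rightarrow> ('a set \<Rightarrow> 'a set) monoid" where
  "profinite_completion G =
     \<lparr>carrier = {f \<in> (\<Pi>\<^sub>E N\<in>fin_index_normals G. rcosets\<^bsub>G\<^esub> N).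
                   \<forall>N\<in>fin_index_normals G. \<forall>M\<in>fin_index_normals G. N \<subseteq> M \<longrightarrow> f N \<subseteq> f M},
      mult = (\<lambda>f g. \<lambda>N\<in>fin_index_normals G. f N <#>\<^bsub>G\<^esub> g N),
      one = (\<lambda>N\<in>fin_index_normals G. N)\<rparr>"

definition profinite_completion_topology :: "('a, 'b) monoid_scheme \<Rightarrow> ('a set \<Rightarrow> 'a set) topology" where
  "profinite_completion_topology G =
     subtopology
       (product_topology (\<lambda>N. discrete_topology (rcosets\<^bsub>G\<^esub> N)) (fin_index_normals G))
       (carrier (profinite_completion G))"

end

theory Submission
  imports Defs
begin


lemma fin_normal: "N \<in> fin_index_normals G \<Longrightarrow> N \<lhd> G"
  by (simp add: fin_index_normals_def)

lemma fin_finite: "N \<in> fin_index_normals G \<Longrightarrow> finite (rcosets\<^bsub>G\<^esub> N)"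
  by (simp add: fin_index_normals_def)

lemma carrier_G_fin: assumes "group G" shows "carrier G \<in> fin_index_normals G"
proof -
  interpret group G by fact
  have n: "carrier G \<lhd> G" by (rule normal_self)
  have "rcosets\<^bsub>G\<^esub> (carrier G) = {carrier G}"
  proof -
    have "carrier G #>\<^bsub>G\<^esub> x = carrier G" if "x \<in> carrier G" for x
      using that by (simp add: coset_join2 subgroup_self)
    then show ?thesis unfolding RCOSETS_def by auto
  qed
  then show ?thesis using n by (simp add: fin_index_normals_def)
qed

lemma PC_carrier: "f \<in> carrier (profinite_completion G) \<longleftrightarrow>
   f \<in> (\<Pi>\<^sub>E N\<in>fin_index_normals G. rcosets\<^bsub>G\<^esub> N) \<and>
   (\<forall>N\<in>fin_index_normals G. \<forall>M\<in>fin_index_normals G. N \<subseteq> M \<longrightarrow> f N \<subseteq> f M)"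
  by (simp add: profinite_completion_def)

lemma PC_mult: "f \<otimes>\<^bsub>profinite_completion G\<^esub> g = (\<lambda>N\<in>fin_index_normals G. f N <#>\<^bsub>G\<^esub> g N)"
  by (simp add: profinite_completion_def)

lemma PC_one: "\<one>\<^bsub>profinite_completion G\<^esub> = (\<lambda>N\<in>fin_index_normals G. N)"
  by (simp add: profinite_completion_def)

lemma PC_mem: "f \<in> carrier (profinite_completion G) \<Longrightarrow> N \<in> fin_index_normals G \<Longrightarrow> f N \<in> rcosets\<^bsub>G\<^esub> N"
  by (auto simp: PC_carrier)

lemma PC_ext: "f \<in> carrier (profinite_completion G) \<Longrightarrow> f \<in> extensional (fin_index_normals G)"
  by (auto simp: PC_carrier PiE_iff)

lemma set_mult_mono: "A \<subseteq> A' \<Longrightarrow> B \<subseteq> B' \<Longrightarrow> A <#>\<^bsub>G\<^esub> B \<subseteq> A' <#>\<^bsub>G\<^esub> B'"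
  unfolding set_mult_def by blast

lemma set_inv_mono: "A \<subseteq> A' \<Longrightarrow> set_inv\<^bsub>G\<^esub> A \<subseteq> set_inv\<^bsub>G\<^esub> A'"
  unfolding SET_INV_def by blast

context
  fixes G :: "('a, 'b) monoid_scheme" (structure)
  assumes grp: "group G"
begin

lemma PC_group: "group (profinite_completion G)"
proof -
  interpret group G by (rule grp)
  let ?P = "profinite_completion G"
  let ?I = "fin_index_normals G"
  show ?thesis
  proof (rule groupI)
    fix x y assume x: "x \<in> carrier ?P" and y: "y \<in> carrier ?P"
    have c: "\<forall>N\<in>?I. \<forall>M\<in>?I. N \<subseteq> M \<longrightarrow> x N <#> y N \<subseteq> x M <#> y M"
    proof (intro ballI impI)
      fix N M assume "N \<in> ?I" "M \<in> ?I" "N \<subseteq> M"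
      then show "x N <#> y N \<subseteq> x M <#> y M"
        using x y unfolding PC_carrier by (intro set_mult_mono) auto
    qed
    show "x \<otimes>\<^bsub>?P\<^esub> y \<in> carrier ?P"
      using x y c unfolding PC_carrier PC_mult
      by (auto simp: PiE_iff fin_normal normal.setmult_closed)
  next
    show "\<one>\<^bsub>?P\<^esub> \<in> carrier ?P"
      unfolding PC_carrier PC_one
      by (auto simp: fin_normal normal.axioms(1) subgroup.subgroup_in_rcosets is_group)
  next
    fix x y z assume x: "x \<in> carrier ?P" and y: "y \<in> carrier ?P" and z: "z \<in> carrier ?P"
    show "x \<otimes>\<^bsub>?P\<^esub> y \<otimes>\<^bsub>?P\<^esub> z = x \<otimes>\<^bsub>?P\<^esub> (y \<otimes>\<^bsub>?P\<^esub> z)"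
      unfolding PC_mult
      by (intro restrict_ext) (simp add: normal.rcosets_assoc[OF fin_normal PC_mem PC_mem PC_mem] x y z)
  next
    fix x assume x: "x \<in> carrier ?P"
    show "\<one>\<^bsub>?P\<^esub> \<otimes>\<^bsub>?P\<^esub> x = x"
      unfolding PC_mult PC_one
      by (rule extensionalityI[OF _ PC_ext[OF x]])
         (auto simp add: normal.rcosets_mult_eq[OF fin_normal PC_mem] x)
  next
    fix x assume x: "x \<in> carrier ?P"
    show "\<exists>y\<in>carrier ?P. y \<otimes>\<^bsub>?P\<^esub> x = \<one>\<^bsub>?P\<^esub>"
    proof (intro bexI)
      show "(\<lambda>N\<in>?I. set_inv (x N)) \<in> carrier ?P"
        using x unfolding PC_carrier
        by (auto simp: PiE_iff fin_normal normal.setinv_closed intro!: set_inv_mono)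
      show "(\<lambda>N\<in>?I. set_inv (x N)) \<otimes>\<^bsub>?P\<^esub> x = \<one>\<^bsub>?P\<^esub>"
        unfolding PC_mult PC_one
        by (intro restrict_ext) (simp add: normal.rcosets_inv_mult_group_eq[OF fin_normal PC_mem] x)
    qed
  qed
qed

end

context
  fixes G :: "('a, 'b) monoid_scheme" (structure)
  assumes grp: "group G"
begin

interpretation group G by (rule grp)

abbreviation "PP \<equiv> profinite_completion G"
abbreviation "II \<equiv> fin_index_normals G"
abbreviation "TT \<equiv> profinite_completion_topology G"
abbreviation "DD \<equiv> (\<lambda>N. discrete_topology (rcosets N))"

lemma PC_inv: assumes x: "x \<in> carrier PP"
  shows "inv\<^bsub>PP\<^esub> x = (\<lambda>N\<in>II. set_inv (x N))"
proof -
  interpret P: group PP by (rule PC_group[OF grp])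
  have c: "(\<lambda>N\<in>II. set_inv (x N)) \<in> carrier PP"
    using x unfolding PC_carrier
    by (auto simp: PiE_iff fin_normal normal.setinv_closed intro!: set_inv_mono)
  have "(\<lambda>N\<in>II. set_inv (x N)) \<otimes>\<^bsub>PP\<^esub> x = \<one>\<^bsub>PP\<^esub>"
    unfolding PC_mult PC_one
    by (intro restrict_ext) (simp add: normal.rcosets_inv_mult_group_eq[OF fin_normal PC_mem] x)
  then show ?thesis using P.inv_equality[OF _ x c] by simp
qed

lemma proj_hom: assumes N: "N \<in> II" shows "(\<lambda>f. f N) \<in> hom PP (G Mod N)"
  unfolding hom_def using N by (auto simp: PC_mem PC_mult FactGroup_def)

lemma TT_topspace: "topspace TT = carrier PP"
proof -
  have "topspace TT = (\<Pi>\<^sub>E N\<in>II. rcosets N) \<inter> carrier PP"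
    by (simp add: profinite_completion_topology_def o_def)
  moreover have "carrier PP \<subseteq> (\<Pi>\<^sub>E N\<in>II. rcosets N)"
    by (simp add: PC_carrier subset_iff)
  ultimately show ?thesis by blast
qed

lemma TT_proj: assumes N: "N \<in> II" shows "continuous_map TT (DD N) (\<lambda>f. f N)"
  unfolding profinite_completion_topology_def
  by (rule continuous_map_from_subtopology) (rule continuous_map_product_projection[OF N])

lemma TT_into: assumes "\<phi> \<in> topspace XX \<rightarrow> carrier PP"
   and "\<And>N. N \<in> II \<Longrightarrow> continuous_map XX (DD N) (\<lambda>x. \<phi> x N)"
  shows "continuous_map XX TT \<phi>"
  unfolding profinite_completion_topology_def continuous_map_in_subtopology
proof
  show "\<phi> \<in> topspace XX \<rightarrow> carrier PP" by fact
  show "continuous_map XX (product_topology DD II) \<phi>"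
  proof -
    have "\<phi> ` topspace XX \<subseteq> extensional II" using assms(1) PC_ext by blast
    then show ?thesis using assms(2) by (simp add: continuous_map_componentwise)
  qed
qed

lemma TT_mult_cont: "continuous_map (prod_topology TT TT) TT (\<lambda>(x, y). x \<otimes>\<^bsub>PP\<^esub> y)"
proof (rule TT_into)
  interpret P: group PP by (rule PC_group[OF grp])
  show "(\<lambda>(x, y). x \<otimes>\<^bsub>PP\<^esub> y) \<in> topspace (prod_topology TT TT) \<rightarrow> carrier PP"
    by (auto simp: TT_topspace)
  fix N assume N: "N \<in> II"
  have c1: "continuous_map (prod_topology TT TT) (prod_topology (DD N) (DD N)) (\<lambda>p. (fst p N, snd p N))"
    by (intro continuous_map_pairedI continuous_map_compose[OF continuous_map_fst TT_proj[OF N], unfolded o_def]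
        continuous_map_compose[OF continuous_map_snd TT_proj[OF N], unfolded o_def])
  have c2: "continuous_map (prod_topology (DD N) (DD N)) (DD N) (\<lambda>(a, b). a <#> b)"
    unfolding prod_topology_discrete_topology[symmetric]
    using normal.setmult_closed[OF fin_normal[OF N]] by auto
  have "continuous_map (prod_topology TT TT) (DD N) (\<lambda>p. fst p N <#> snd p N)"
    using continuous_map_compose[OF c1 c2] by (simp add: o_def)
  then show "continuous_map (prod_topology TT TT) (DD N) (\<lambda>x. (case x of (x, y) \<Rightarrow> x \<otimes>\<^bsub>PP\<^esub> y) N)"
    using N by (simp add: PC_mult case_prod_beta)
qed

lemma TT_inv_cont: "continuous_map TT TT (\<lambda>x. inv\<^bsub>PP\<^esub> x)"
proof (rule TT_into)
  interpret P: group PP by (rule PC_group[OF grp])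
  show "(\<lambda>x. inv\<^bsub>PP\<^esub> x) \<in> topspace TT \<rightarrow> carrier PP"
    by (auto simp: TT_topspace)
  fix N assume N: "N \<in> II"
  have c2: "continuous_map (DD N) (DD N) (\<lambda>a. set_inv a)"
    using normal.setinv_closed[OF fin_normal[OF N]] by auto
  have "continuous_map TT (DD N) (\<lambda>x. set_inv (x N))"
    using continuous_map_compose[OF TT_proj[OF N] c2] by (simp add: o_def)
  then show "continuous_map TT (DD N) (\<lambda>x. (inv\<^bsub>PP\<^esub> x) N)"
  proof (rule continuous_map_eq)
    fix x assume "x \<in> topspace TT"
    then have "x \<in> carrier PP" by (simp add: TT_topspace)
    then show "set_inv (x N) = (inv\<^bsub>PP\<^esub> x) N" using N by (simp add: PC_inv)
  qed
qed

lemma TT_topgroup: "topological_group PP TT"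
  unfolding topological_group_def
  using PC_group[OF grp] TT_topspace TT_mult_cont TT_inv_cont by simp

lemma PROD_closed: "closedin (product_topology DD II) (carrier PP)"
proof -
  let ?X = "product_topology DD II"
  let ?Q = "{(N, M). N \<in> II \<and> M \<in> II \<and> N \<subseteq> M}"
  let ?S = "\<lambda>q. {f \<in> topspace ?X. (f (fst q), f (snd q)) \<in> {(a, b). a \<in> rcosets (fst q) \<and> b \<in> rcosets (snd q) \<and> a \<subseteq> b}}"
  have eq: "carrier PP = (\<Inter>q\<in>?Q. ?S q)"
  proof
    show "carrier PP \<subseteq> (\<Inter>q\<in>?Q. ?S q)"
      by (auto simp: PC_carrier PiE_iff) blast
    show "(\<Inter>q\<in>?Q. ?S q) \<subseteq> carrier PP"
    proof
      fix f assume f: "f \<in> (\<Inter>q\<in>?Q. ?S q)"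
      have cG: "carrier G \<in> II" by (rule carrier_G_fin[OF grp])
      then have "(carrier G, carrier G) \<in> ?Q" by simp
      have fQ: "\<And>q. q \<in> ?Q \<Longrightarrow> f \<in> ?S q" using f by (rule INT_D)
      have "f \<in> topspace ?X" using fQ[of "(carrier G, carrier G)"] cG by simp
      moreover have "\<forall>N\<in>II. \<forall>M\<in>II. N \<subseteq> M \<longrightarrow> f N \<subseteq> f M"
      proof (intro ballI impI)
        fix N M assume "N \<in> II" "M \<in> II" "N \<subseteq> M"
        then have "(N, M) \<in> ?Q" by simp
        from fQ[OF this] show "f N \<subseteq> f M" by simp
      qed
      ultimately show "f \<in> carrier PP" by (simp add: PC_carrier o_def)
    qed
  qed
  have "closedin ?X (?S q)" if q: "q \<in> ?Q" for q
  proof (rule closedin_continuous_map_preimage)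
    obtain N M where qq: "q = (N, M)" "N \<in> II" "M \<in> II" using q by auto
    have "continuous_map ?X (prod_topology (DD N) (DD M)) (\<lambda>f. (f N, f M))"
      by (intro continuous_map_pairedI continuous_map_product_projection qq)
    then show "continuous_map ?X (discrete_topology ((rcosets (fst q)) \<times> (rcosets (snd q)))) (\<lambda>f. (f (fst q), f (snd q)))"
      by (simp add: qq prod_topology_discrete_topology)
    show "closedin (discrete_topology ((rcosets (fst q)) \<times> (rcosets (snd q))))
       {(a, b). a \<in> rcosets (fst q) \<and> b \<in> rcosets (snd q) \<and> a \<subseteq> b}"
      by auto
  qed
  moreover have "?Q \<noteq> {}" using carrier_G_fin[OF grp] by auto
  ultimately show ?thesis unfolding eq by (intro closedin_INT) auto
qed

lemma TT_compact: "compact_space TT"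
proof -
  have "compact_space (product_topology DD II)"
    by (auto simp: compact_space_product_topology compact_space_discrete_topology fin_finite)
  then show ?thesis
    unfolding profinite_completion_topology_def
    by (intro compact_space_subtopology closedin_compact_space PROD_closed)
qed

lemma TT_Hausdorff: "Hausdorff_space TT"
  unfolding profinite_completion_topology_def
  by (intro Hausdorff_space_subtopology) (simp add: Hausdorff_space_product_topology)

lemma TT_comp: assumes x: "x \<in> topspace TT" shows "connected_component_of_set TT x = {x}"
proof
  show "{x} \<subseteq> connected_component_of_set TT x"
    using x by (simp add: connected_component_of_refl)
  show "connected_component_of_set TT x \<subseteq> {x}"
  proof
    fix y assume "y \<in> connected_component_of_set TT x"
    then obtain S where S: "connectedin TT S" "x \<in> S" "y \<in> S"
      by (auto simp: connected_component_of_def)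
    have y: "y \<in> topspace TT" using S connectedin_subset_topspace by blast
    have "x N = y N" if N: "N \<in> II" for N
    proof -
      have "connectedin (DD N) ((\<lambda>f. f N) ` S)"
        by (rule connectedin_continuous_map_image[OF TT_proj[OF N] S(1)])
      then obtain a where "(\<lambda>f. f N) ` S \<subseteq> {a}"
        by (auto simp: connectedin_discrete_topology)
      then show ?thesis using S by auto
    qed
    then have "x = y"
      using PC_ext x y TT_topspace by (intro extensionalityI) auto
    then show "y \<in> {x}" by simp
  qed
qed

lemma TT_profinite: "profinite_group PP TT"
  unfolding profinite_group_def
  using TT_topgroup TT_compact TT_Hausdorff TT_comp by blast

end

lemma mem_set_mult: "x \<in> A <#>\<^bsub>M\<^esub> B \<longleftrightarrow> (\<exists>a\<in>A. \<exists>b\<in>B. x = a \<otimes>\<^bsub>M\<^esub> b)"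
  unfolding set_mult_def by auto

lemma hom_preimage_subgroup:
  assumes "group A" "group B" "h \<in> hom A B" "subgroup R B"
  shows "subgroup {x \<in> carrier A. h x \<in> R} A"
proof -
  interpret group_hom A B h using assms by (simp add: group_hom_def group_hom_axioms_def)
  interpret R: subgroup R B by fact
  show ?thesis
  proof (rule G.subgroupI)
    have "\<one>\<^bsub>A\<^esub> \<in> {x \<in> carrier A. h x \<in> R}" using R.one_closed by simp
    then show "{x \<in> carrier A. h x \<in> R} \<noteq> {}" by blast
  qed auto
qed

context
  fixes G :: "('a, 'b) monoid_scheme" (structure)
  assumes grp: "group G"
begin

interpretation group G by (rule grp)

abbreviation "PG \<equiv> profinite_completion G"
abbreviation "TG \<equiv> profinite_completion_topology G"

lemma chain_inter:
  assumes H: "subgroup H PG" "closedin TG H"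
    and C: "C \<noteq> {}" "\<And>K. K \<in> C \<Longrightarrow> subgroup K PG \<and> closedin TG K \<and> H <#>\<^bsub>PG\<^esub> K = carrier PG"
    and ch: "\<And>K1 K2. K1 \<in> C \<Longrightarrow> K2 \<in> C \<Longrightarrow> K1 \<subseteq> K2 \<or> K2 \<subseteq> K1"
  shows "subgroup (\<Inter>C) PG \<and> closedin TG (\<Inter>C) \<and> H <#>\<^bsub>PG\<^esub> (\<Inter>C) = carrier PG"
proof (intro conjI)
  interpret P: group PG by (rule PC_group[OF grp])
  show "subgroup (\<Inter>C) PG" using C by (intro subgroup_Inter) auto
  show "closedin TG (\<Inter>C)" using C by (intro closedin_Inter) auto
  show "H <#>\<^bsub>PG\<^esub> (\<Inter>C) = carrier PG"
  proof
    obtain K0 where K0: "K0 \<in> C" using C by auto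
    have "H <#>\<^bsub>PG\<^esub> (\<Inter>C) \<subseteq> H <#>\<^bsub>PG\<^esub> K0"
      using K0 by (intro set_mult_mono) auto
    then show "H <#>\<^bsub>PG\<^esub> (\<Inter>C) \<subseteq> carrier PG" using C(2)[OF K0] by simp
  next
    show "carrier PG \<subseteq> H <#>\<^bsub>PG\<^esub> (\<Inter>C)"
    proof
      fix x assume x: "x \<in> carrier PG"
      define F where "F = (\<lambda>K. {k \<in> topspace TG. x \<otimes>\<^bsub>PG\<^esub> inv\<^bsub>PG\<^esub> k \<in> H} \<inter> K)"
      have cont: "continuous_map TG TG (\<lambda>k. x \<otimes>\<^bsub>PG\<^esub> inv\<^bsub>PG\<^esub> k)"
      proof -
        have "continuous_map TG (prod_topology TG TG) (\<lambda>k. (x, inv\<^bsub>PG\<^esub> k))"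
          using x by (intro continuous_map_pairedI TT_inv_cont[OF grp]) (simp add: TT_topspace[OF grp])
        from continuous_map_compose[OF this TT_mult_cont[OF grp]] show ?thesis by (simp add: o_def)
      qed
      have Fne: "F K \<noteq> {}" if K: "K \<in> C" for K
      proof -
        have "x \<in> H <#>\<^bsub>PG\<^esub> K" using C(2)[OF K] x by simp
        then obtain h k where hk: "h \<in> H" "k \<in> K" "x = h \<otimes>\<^bsub>PG\<^esub> k" unfolding mem_set_mult by blast
        have hc: "h \<in> carrier PG" using subgroup.mem_carrier[OF H(1) hk(1)] .
        have kc: "k \<in> carrier PG" using subgroup.mem_carrier[OF _ hk(2)] C(2)[OF K] by blast
        have "x \<otimes>\<^bsub>PG\<^esub> inv\<^bsub>PG\<^esub> k = h" using hc kc hk(3) by (simp add: P.m_assoc)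
        then have "k \<in> F K" using hk kc by (simp add: F_def TT_topspace[OF grp])
        then show ?thesis by blast
      qed
      have "\<Inter>(F ` C) \<noteq> {}"
      proof (rule compact_space_fip[THEN iffD1, OF TT_compact[OF grp], rule_format], intro conjI allI impI ballI)
        fix U assume "U \<in> F ` C"
        then obtain K where K: "K \<in> C" "U = F K" by auto
        have "closedin TG {k \<in> topspace TG. x \<otimes>\<^bsub>PG\<^esub> inv\<^bsub>PG\<^esub> k \<in> H}"
          by (rule closedin_continuous_map_preimage[OF cont H(2)])
        then show "closedin TG U" unfolding K F_def using C(2)[OF K(1)] by blast
      next
        fix \<F> assume "finite \<F> \<and> \<F> \<subseteq> F ` C"
        then obtain C0 where C0: "C0 \<subseteq> C" "finite C0" "\<F> = F ` C0"
          by (meson finite_subset_image)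
        show "\<Inter>\<F> \<noteq> {}"
        proof (cases "C0 = {}")
          case True then show ?thesis using C0 by simp
        next
          case False
          have "subset.chain C C0" using C0 ch by (auto simp: subset_chain_def)
          then have "\<Inter>C0 \<in> C0" using Inter_in_chain[OF C0(2) False] by blast
          then have "F (\<Inter>C0) \<subseteq> \<Inter>\<F>" using C0 by (auto simp: F_def)
          moreover have "F (\<Inter>C0) \<noteq> {}" using Fne \<open>\<Inter>C0 \<in> C0\<close> C0(1) by blast
          ultimately show ?thesis by blast
        qed
      qed
      then obtain k where k: "\<And>K. K \<in> C \<Longrightarrow> k \<in> F K" by blast
      obtain K0 where K0: "K0 \<in> C" using C by auto
      have kt: "k \<in> carrier PG" "x \<otimes>\<^bsub>PG\<^esub> inv\<^bsub>PG\<^esub> k \<in> H"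
        using k[OF K0] by (auto simp: F_def TT_topspace[OF grp])
      have kC: "k \<in> \<Inter>C" using k by (auto simp: F_def)
      have "x = (x \<otimes>\<^bsub>PG\<^esub> inv\<^bsub>PG\<^esub> k) \<otimes>\<^bsub>PG\<^esub> k" using x kt by (simp add: P.m_assoc)
      then show "x \<in> H <#>\<^bsub>PG\<^esub> (\<Inter>C)" using kt kC by (auto simp: mem_set_mult)
    qed
  qed
qed

lemma carrier_in_A:
  assumes H: "subgroup H PG"
  shows "subgroup (carrier PG) PG \<and> closedin TG (carrier PG) \<and> H <#>\<^bsub>PG\<^esub> (carrier PG) = carrier PG"
proof (intro conjI)
  interpret P: group PG by (rule PC_group[OF grp])
  show "subgroup (carrier PG) PG" by (rule P.subgroup_self)
  show "closedin TG (carrier PG)" using TT_topspace[OF grp] closedin_topspace by metis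
  show "H <#>\<^bsub>PG\<^esub> carrier PG = carrier PG"
  proof
    show "H <#>\<^bsub>PG\<^esub> carrier PG \<subseteq> carrier PG"
      using subgroup.mem_carrier[OF H] by (auto simp: mem_set_mult)
    show "carrier PG \<subseteq> H <#>\<^bsub>PG\<^esub> carrier PG"
    proof
      fix x assume x: "x \<in> carrier PG"
      have "x = \<one>\<^bsub>PG\<^esub> \<otimes>\<^bsub>PG\<^esub> x" using x by simp
      then show "x \<in> H <#>\<^bsub>PG\<^esub> carrier PG"
        unfolding mem_set_mult using x subgroup.one_closed[OF H] by blast
    qed
  qed
qed

lemma minimal_supplement:
  assumes H: "subgroup H PG" "closedin TG H"
  shows "\<exists>K. (subgroup K PG \<and> closedin TG K \<and> H <#>\<^bsub>PG\<^esub> K = carrier PG) \<and>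
     (\<forall>K'. (subgroup K' PG \<and> closedin TG K' \<and> H <#>\<^bsub>PG\<^esub> K' = carrier PG) \<and> K' \<subseteq> K \<longrightarrow> K' = K)"
proof -
  define A where "A = {K. subgroup K PG \<and> closedin TG K \<and> H <#>\<^bsub>PG\<^esub> K = carrier PG}"
  have Asub: "K \<subseteq> carrier PG" if "K \<in> A" for K
    using that subgroup.subset by (auto simp: A_def)
  define AC where "AC = (\<lambda>K. carrier PG - K) ` A"
  have "\<exists>M0\<in>AC. \<forall>Y\<in>AC. M0 \<subseteq> Y \<longrightarrow> Y = M0"
  proof (rule subset_Zorn)
    fix CC assume CC: "subset.chain AC CC"
    show "\<exists>U\<in>AC. \<forall>Y\<in>CC. Y \<subseteq> U"
    proof (cases "CC = {}")
      case True
      have "carrier PG \<in> A" using carrier_in_A[OF H(1)] by (simp add: A_def)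
      then show ?thesis using True by (auto simp: AC_def)
    next
      case False
      define C where "C = (\<lambda>Y. carrier PG - Y) ` CC"
      have CA: "C \<subseteq> A"
      proof
        fix K assume "K \<in> C"
        then obtain Y where Y: "Y \<in> CC" "K = carrier PG - Y" by (auto simp: C_def)
        then have "Y \<in> AC" using CC by (auto simp: subset_chain_def)
        then obtain K0 where "K0 \<in> A" "Y = carrier PG - K0" by (auto simp: AC_def)
        moreover have "carrier PG - (carrier PG - K0) = K0" using Asub[OF \<open>K0 \<in> A\<close>] by blast
        ultimately show "K \<in> A" using Y by simp
      qed
      have chC: "K1 \<subseteq> K2 \<or> K2 \<subseteq> K1" if K12: "K1 \<in> C" "K2 \<in> C" for K1 K2
      proof -
        obtain X1 X2 where "X1 \<in> CC" "X2 \<in> CC" "K1 = carrier PG - X1" "K2 = carrier PG - X2"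
          using K12 unfolding C_def by blast
        moreover have "X1 \<subseteq> X2 \<or> X2 \<subseteq> X1" using CC calculation(1,2) by (auto simp: subset_chain_def)
        ultimately show ?thesis by blast
      qed
      have "\<Inter>C \<in> A"
        using chain_inter[OF H, of C] CA chC False by (auto simp: A_def C_def)
      moreover have "Y \<subseteq> carrier PG - \<Inter>C" if "Y \<in> CC" for Y
      proof -
        have "Y \<in> AC" using CC that by (auto simp: subset_chain_def)
        then have "Y \<subseteq> carrier PG" by (auto simp: AC_def)
        moreover have "carrier PG - Y \<in> C" using that by (auto simp: C_def)
        ultimately show ?thesis by blast
      qed
      ultimately show ?thesis by (auto simp: AC_def)
    qed
  qed
  then obtain K where K: "K \<in> A" and maxK: "\<forall>Y\<in>AC. carrier PG - K \<subseteq> Y \<longrightarrow> Y = carrier PG - K"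
    by (auto simp: AC_def)
  show ?thesis
  proof (intro exI conjI allI impI)
    show "subgroup K PG" "closedin TG K" "H <#>\<^bsub>PG\<^esub> K = carrier PG" using K by (auto simp: A_def)
    fix K' assume K': "(subgroup K' PG \<and> closedin TG K' \<and> H <#>\<^bsub>PG\<^esub> K' = carrier PG) \<and> K' \<subseteq> K"
    then have "K' \<in> A" by (simp add: A_def)
    then have "carrier PG - K' = carrier PG - K"
      using maxK K' by (auto simp: AC_def)
    then show "K' = K" using Asub[OF K] Asub[OF \<open>K' \<in> A\<close>] by blast
  qed
qed

lemma key:
  assumes CG: "C_group G" and H: "subgroup H PG" "closedin TG H"
    and K: "subgroup K PG" "closedin TG K" "H <#>\<^bsub>PG\<^esub> K = carrier PG"
    and minK: "\<forall>K'. (subgroup K' PG \<and> closedin TG K' \<and> H <#>\<^bsub>PG\<^esub> K' = carrier PG) \<and> K' \<subseteq> K \<longrightarrow> K' = K"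
  shows "H \<inter> K = {\<one>\<^bsub>PG\<^esub>}"
proof
  interpret P: group PG by (rule PC_group[OF grp])
  show "{\<one>\<^bsub>PG\<^esub>} \<subseteq> H \<inter> K"
    using subgroup.one_closed[OF H(1)] subgroup.one_closed[OF K(1)] by blast
  show "H \<inter> K \<subseteq> {\<one>\<^bsub>PG\<^esub>}"
  proof
    fix d assume d: "d \<in> H \<inter> K"
    have dc: "d \<in> carrier PG" using d subgroup.mem_carrier[OF H(1)] by blast
    show "d \<in> {\<one>\<^bsub>PG\<^esub>}"
    proof (rule ccontr)
      assume dne: "d \<notin> {\<one>\<^bsub>PG\<^esub>}"
      have "\<exists>N\<in>fin_index_normals G. d N \<noteq> N"
      proof (rule ccontr)
        assume "\<not> (\<exists>N\<in>fin_index_normals G. d N \<noteq> N)"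
        then have "d = \<one>\<^bsub>PG\<^esub>" unfolding PC_one
          by (intro extensionalityI[OF PC_ext[OF dc]]) auto
        then show False using dne by simp
      qed
      then obtain N where N: "N \<in> fin_index_normals G" and dN: "d N \<noteq> N" by blast
      have nN: "N \<lhd> G" by (rule fin_normal[OF N])
      interpret MN: group "G Mod N" by (rule normal.factorgroup_is_group[OF nN])
      interpret pi: group_hom PG "G Mod N" "\<lambda>f. f N"
        using proj_hom[OF grp N] by (simp add: group_hom_def group_hom_axioms_def P.is_group MN.is_group)
      interpret r: group_hom G "G Mod N" "\<lambda>g. N #> g"
        using normal.r_coset_hom_Mod[OF nN] by (simp add: group_hom_def group_hom_axioms_def is_group MN.is_group)
      define D where "D = H \<inter> K"
      have subD: "subgroup D PG" unfolding D_def using H(1) K(1) by (rule P.subgroups_Inter_pair)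
      define Q where "Q = (\<lambda>f. f N) ` D"
      have subQ: "subgroup Q (G Mod N)" unfolding Q_def by (rule pi.subgroup_img_is_subgroup[OF subD])
      define S where "S = {g \<in> carrier G. N #> g \<in> Q}"
      have subS: "subgroup S G" unfolding S_def
        by (rule hom_preimage_subgroup[OF is_group MN.is_group normal.r_coset_hom_Mod[OF nN] subQ])
      obtain W where W: "subgroup W G" "S <#> W = carrier G" "S \<inter> W = {\<one>}"
        using CG subS unfolding C_group_def permutable_complement_def by blast
      define R where "R = (\<lambda>g. N #> g) ` W"
      have subR: "subgroup R (G Mod N)" unfolding R_def by (rule r.subgroup_img_is_subgroup[OF W(1)])
      define L0 where "L0 = {x \<in> carrier PG. x N \<in> R}"
      have subL0: "subgroup L0 PG" unfolding L0_def
        by (rule hom_preimage_subgroup[OF P.is_group MN.is_group proj_hom[OF grp N] subR])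
      define L where "L = K \<inter> L0"
      have subL: "subgroup L PG" unfolding L_def using K(1) subL0 by (rule P.subgroups_Inter_pair)
      have clL0: "closedin TG L0"
      proof -
        have "R \<subseteq> rcosets N" using subgroup.subset[OF subR] by (simp add: FactGroup_def)
        then have "closedin TG {x \<in> topspace TG. x N \<in> R}"
          by (intro closedin_continuous_map_preimage[OF TT_proj[OF grp N]]) simp
        then show ?thesis by (simp add: L0_def TT_topspace[OF grp])
      qed
      have clL: "closedin TG L" unfolding L_def using K(2) clL0 by blast
      have HL: "H <#>\<^bsub>PG\<^esub> L = carrier PG"
      proof
        show "H <#>\<^bsub>PG\<^esub> L \<subseteq> carrier PG"
          using subgroup.mem_carrier[OF H(1)] subgroup.mem_carrier[OF subL] by (auto simp: mem_set_mult)
        show "carrier PG \<subseteq> H <#>\<^bsub>PG\<^esub> L"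
        proof
          fix x assume x: "x \<in> carrier PG"
          then have "x \<in> H <#>\<^bsub>PG\<^esub> K" using K(3) by simp
          then obtain h k where hk: "h \<in> H" "k \<in> K" "x = h \<otimes>\<^bsub>PG\<^esub> k"
            unfolding mem_set_mult by blast
          have hc: "h \<in> carrier PG" using subgroup.mem_carrier[OF H(1) hk(1)] .
          have kc: "k \<in> carrier PG" using subgroup.mem_carrier[OF K(1) hk(2)] .
          have "k N \<in> carrier (G Mod N)" using pi.hom_closed[OF kc] .
          then obtain g where g: "g \<in> carrier G" "k N = N #> g" by (auto simp: carrier_FactGroup)
          then have "g \<in> S <#> W" using W(2) by simp
          then obtain s w where sw: "s \<in> S" "w \<in> W" "g = s \<otimes> w" unfolding mem_set_mult by blast
          have sc: "s \<in> carrier G" using sw(1) by (simp add: S_def)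
          have wc: "w \<in> carrier G" using subgroup.mem_carrier[OF W(1) sw(2)] .
          have "N #> s \<in> Q" using sw(1) by (simp add: S_def)
          then obtain e where e: "e \<in> D" "N #> s = e N" by (auto simp: Q_def)
          have eH: "e \<in> H" and eK: "e \<in> K" using e(1) by (auto simp: D_def)
          have ec: "e \<in> carrier PG" using subgroup.mem_carrier[OF H(1) eH] .
          define l where "l = inv\<^bsub>PG\<^esub> e \<otimes>\<^bsub>PG\<^esub> k"
          have lK: "l \<in> K" unfolding l_def
            using subgroup.m_closed[OF K(1) subgroup.m_inv_closed[OF K(1) eK] hk(2)] .
          have lc: "l \<in> carrier PG" unfolding l_def using ec kc by simp
          have "l N = inv\<^bsub>G Mod N\<^esub> (e N) \<otimes>\<^bsub>G Mod N\<^esub> k N"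
            unfolding l_def by (simp only: pi.hom_mult[OF P.inv_closed[OF ec] kc] pi.hom_inv[OF ec])
          also have "\<dots> = inv\<^bsub>G Mod N\<^esub> (N #> s) \<otimes>\<^bsub>G Mod N\<^esub> (N #> g)" using e g by simp
          also have "\<dots> = N #> (inv s \<otimes> g)" using sc g(1) by (simp add: r.hom_mult r.hom_inv)
          also have "inv s \<otimes> g = w" using sc wc sw(3) by (simp add: m_assoc[symmetric])
          finally have "l N \<in> R" using sw(2) by (simp add: R_def)
          then have lL: "l \<in> L" using lK lc by (simp add: L_def L0_def)
          have "x = (h \<otimes>\<^bsub>PG\<^esub> e) \<otimes>\<^bsub>PG\<^esub> l"
          proof -
            have "(h \<otimes>\<^bsub>PG\<^esub> e) \<otimes>\<^bsub>PG\<^esub> (inv\<^bsub>PG\<^esub> e \<otimes>\<^bsub>PG\<^esub> k) = h \<otimes>\<^bsub>PG\<^esub> (e \<otimes>\<^bsub>PG\<^esub> (inv\<^bsub>PG\<^esub> e \<otimes>\<^bsub>PG\<^esub> k))"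
              using hc ec kc by (simp add: P.m_assoc)
            also have "e \<otimes>\<^bsub>PG\<^esub> (inv\<^bsub>PG\<^esub> e \<otimes>\<^bsub>PG\<^esub> k) = k" using ec kc by (simp add: P.m_assoc[symmetric] P.r_inv)
            finally show ?thesis unfolding l_def using hk(3) by simp
          qed
          moreover have "h \<otimes>\<^bsub>PG\<^esub> e \<in> H" using subgroup.m_closed[OF H(1) hk(1) eH] .
          ultimately show "x \<in> H <#>\<^bsub>PG\<^esub> L" using lL unfolding mem_set_mult by blast
        qed
      qed
      have "L = K" using minK subL clL HL by (auto simp: L_def)
      then have "d \<in> L0" using d by (auto simp: L_def)
      then obtain w where w: "w \<in> W" "d N = N #> w" by (auto simp: L0_def R_def)
      have wc: "w \<in> carrier G" using subgroup.mem_carrier[OF W(1) w(1)] .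
      have "d N \<in> Q" using d by (auto simp: Q_def D_def)
      then have "w \<in> S" using w wc by (simp add: S_def)
      then have "w = \<one>" using W(3) w(1) by blast
      then have "d N = N" using w(2) by simp
      then show False using dN by simp
    qed
  qed
qed

end

theorem corollary2p5:
  fixes G :: "('a, 'b) monoid_scheme"
  assumes "C_group G"
  shows "profinite_C_group (profinite_completion G) (profinite_completion_topology G)"
proof -
  have grp: "group G" using assms by (simp add: C_group_def)
  show ?thesis unfolding profinite_C_group_def
  proof (intro conjI allI impI)
    show "profinite_group (profinite_completion G) (profinite_completion_topology G)"
      by (rule TT_profinite[OF grp])
    fix H assume H: "subgroup H (profinite_completion G) \<and> closedin (profinite_completion_topology G) H"
    then have H1: "subgroup H (profinite_completion G)" and H2: "closedin (profinite_completion_topology G) H"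
      by auto
    obtain K where KK: "(subgroup K (profinite_completion G) \<and> closedin (profinite_completion_topology G) K \<and>
      H <#>\<^bsub>profinite_completion G\<^esub> K = carrier (profinite_completion G)) \<and>
      (\<forall>K'. (subgroup K' (profinite_completion G) \<and> closedin (profinite_completion_topology G) K' \<and>
         H <#>\<^bsub>profinite_completion G\<^esub> K' = carrier (profinite_completion G)) \<and> K' \<subseteq> K \<longrightarrow> K' = K)"
      using minimal_supplement[OF grp H1 H2] by (rule exE)
    note K = KK[THEN conjunct1, THEN conjunct1] KK[THEN conjunct1, THEN conjunct2, THEN conjunct1]
      KK[THEN conjunct1, THEN conjunct2, THEN conjunct2]
    have "H \<inter> K = {\<one>\<^bsub>profinite_completion G\<^esub>}"
      by (rule key[OF grp assms H1 H2 K KK[THEN conjunct2]])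
    then show "\<exists>K. closedin (profinite_completion_topology G) K \<and> permutable_complement (profinite_completion G) H K"
      using K unfolding permutable_complement_def by blast
  qed
qed

end
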